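(* Let $\delta\le10^{-7}$ be the deletion probability, let $m>n$, $w=10000\log m$, and $d=10\frac{\log m}{\log(1/\delta)}$. Let $X$ be a set of $m^2$ independent traces of a string $S=p_1,\ldots,p_n$, and for each $x\in X$ let $i_x$ be uniform in $\{1,\ldots,n-3w+1\}$, $L_x=x_{i_x},\ldots,x_{i_x+w-1}$ and $R_x=x_{i_x+2w},\ldots,x_{i_x+3w-1}$. Then with probability at least $1-O(m^{-0.2})$, no $x\in X$ has more than $d$ deletions within $L_x$ or within $R_x$.
   Context: A trace is generated from $S$ by sampling independent bits $t_k$ with $\Pr[t_k=1]=p_k$, deleting each independently with probability $\delta$, and concatenating survivors. For a block of $w$ consecutive trace bits originating from original positions $a_1<\cdots<a_w$, the number of deletions within the block is $(a_w-a_1+1)-w$, the number of original positions between its first and last bits that were deleted. $\log$ denotes the natural logarithm. *)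

theory Defs
  imports "HOL-Probability.Probability"
begin

text \<open>Original string S = p_1..p_n is given by p :: nat => real on positions 1..n.
  A trace sample is a pair (t, del): t k is the sampled bit at original position k
  (Pr[t k] = p k), del k says whether position k is deleted (Pr = delta).\<close>

definition trace_pmf :: "(nat \<Rightarrow> real) \<Rightarrow> real \<Rightarrow> nat \<Rightarrow> ((nat \<Rightarrow> bool) \<times> (nat \<Rightarrow> bool)) pmf" where
  "trace_pmf p \<delta> n =
     pair_pmf (Pi_pmf {1..n} False (\<lambda>k. bernoulli_pmf (p k)))
              (Pi_pmf {1..n} False (\<lambda>k. bernoulli_pmf \<delta>))"

text \<open>Original positions of the surviving bits, in increasing order; the j-th trace bit
  (1-based) originates from position (kept_positions n del) ! (j-1).\<close>
definition kept_positions :: "nat \<Rightarrow> (nat \<Rightarrow> bool) \<Rightarrow> nat list" where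
  "kept_positions n del = filter (\<lambda>k. \<not> del k) [1..<n+1]"

definition trace_string :: "nat \<Rightarrow> (nat \<Rightarrow> bool) \<times> (nat \<Rightarrow> bool) \<Rightarrow> bool list" where
  "trace_string n s = map (fst s) (kept_positions n (snd s))"

text \<open>Number of deletions within the block of w consecutive trace bits starting at trace
  position i (1-based): the number of deleted original positions between the origins of the
  first and last bit of the block, i.e. (a_w - a_1 + 1) - w.  If the trace is too short,
  the block is truncated at the end of the trace (and is empty if i exceeds its length).\<close>
definition block_deletions :: "nat \<Rightarrow> (nat \<Rightarrow> bool) \<Rightarrow> nat \<Rightarrow> nat \<Rightarrow> nat" where
  "block_deletions n del i w =
     (let ps = kept_positions n del in
      if w = 0 \<or> i = 0 \<or> i > length ps then 0
      else (let a1 = ps ! (i - 1); aw = ps ! (min (i + w - 1) (length ps) - 1)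
            in card {k. a1 \<le> k \<and> k \<le> aw \<and> del k}))"

definition trace_experiment :: "(nat \<Rightarrow> real) \<Rightarrow> real \<Rightarrow> nat \<Rightarrow> nat \<Rightarrow> nat \<Rightarrow>
    (nat \<Rightarrow> ((nat \<Rightarrow> bool) \<times> (nat \<Rightarrow> bool)) \<times> nat) pmf" where
  "trace_experiment p \<delta> n m w =
     Pi_pmf {..<m^2} undefined (\<lambda>_. pair_pmf (trace_pmf p \<delta> n) (pmf_of_set {1..n - 3*w + 1}))"

end

theory Submission
  imports Defs
begin


lemma kept_sorted: "sorted_wrt (<) (kept_positions n del)"
  unfolding kept_positions_def by (rule sorted_wrt_filter, rule sorted_wrt_upt)

lemma kept_set: "set (kept_positions n del) = {k. 1 \<le> k \<and> k \<le> n \<and> \<not> del k}"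
  unfolding kept_positions_def by auto

lemma block_bad:
  assumes "block_deletions n del i w \<ge> D" "D \<ge> 1"
  shows "\<exists>a\<in>{1..n}. \<exists>T. T \<subseteq> {a..<a+w+D} \<and> T \<subseteq> {1..n} \<and> card T = D \<and> (\<forall>k\<in>T. del k)"
proof -
  define ps where "ps = kept_positions n del"
  have bd: "block_deletions n del i w = (if w = 0 \<or> i = 0 \<or> i > length ps then 0
      else card {k. ps ! (i - 1) \<le> k \<and> k \<le> ps ! (min (i + w - 1) (length ps) - 1) \<and> del k})"
    unfolding block_deletions_def ps_def Let_def by simp
  have c: "\<not> (w = 0 \<or> i = 0 \<or> i > length ps)" using assms bd by (auto split: if_splits)
  define j where "j = min (i + w - 1) (length ps) - 1"
  define a1 where "a1 = ps ! (i - 1)"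
  define aw where "aw = ps ! j"
  have ij: "i - 1 \<le> j" "j < length ps" "j \<le> i + w - 2" using c unfolding j_def by auto
  have srt: "sorted_wrt (<) ps" unfolding ps_def by (rule kept_sorted)
  have setps: "set ps = {k. 1 \<le> k \<and> k \<le> n \<and> \<not> del k}" unfolding ps_def by (rule kept_set)
  have "a1 \<in> set ps" unfolding a1_def using c by (intro nth_mem) auto
  then have a1n: "a1 \<in> {1..n}" using setps by simp
  have "aw \<in> set ps" unfolding aw_def using ij by (intro nth_mem) auto
  then have awn: "aw \<in> {1..n}" using setps by simp
  have cardDel: "card {k. a1 \<le> k \<and> k \<le> aw \<and> del k} \<ge> D"
    using assms(1) bd c unfolding a1_def aw_def j_def by simp
  define W where "W = {a1..<a1+w+D} \<inter> {a1..aw}"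
  have "card (W \<inter> {k. del k}) \<ge> D"
  proof (cases "aw < a1 + w + D")
    case True
    then have "W \<inter> {k. del k} = {k. a1 \<le> k \<and> k \<le> aw \<and> del k}" unfolding W_def by auto
    then show ?thesis using cardDel by simp
  next
    case False
    then have W: "W = {a1..<a1+w+D}" unfolding W_def by auto
    have K: "W - {k. del k} \<subseteq> (\<lambda>l. ps ! l) ` {i-1..j}"
    proof
      fix k assume k: "k \<in> W - {k. del k}"
      then have "k \<in> set ps" using setps W awn a1n False by auto
      then obtain l where l: "l < length ps" "k = ps ! l" by (metis in_set_conv_nth)
      have "i - 1 \<le> l"
      proof (rule ccontr)
        assume "\<not> i - 1 \<le> l"
        then have "ps ! l < ps ! (i-1)" using srt l ij by (simp add: sorted_wrt_nth_less)
        then show False using k l W a1_def by auto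
      qed
      moreover have "l \<le> j"
      proof (rule ccontr)
        assume "\<not> l \<le> j"
        then have "ps ! j < ps ! l" using srt l ij by (simp add: sorted_wrt_nth_less)
        then show False using k l W aw_def False by auto
      qed
      ultimately show "k \<in> (\<lambda>l. ps ! l) ` {i-1..j}" using l by auto
    qed
    have "card (W - {k. del k}) \<le> card {i-1..j}"
      using card_image_le[of "{i-1..j}" "\<lambda>l. ps ! l"] card_mono[OF _ K] by force
    also have "\<dots> \<le> w" using ij c by auto
    finally have k1: "card (W - {k. del k}) \<le> w" .
    have fW: "finite W" unfolding W by simp
    have cW: "card W = w + D" unfolding W by simp
    show ?thesis using card_Int_Diff[OF fW, of "{k. del k}"] k1 cW by linarith
  qed
  then obtain T where T: "T \<subseteq> W \<inter> {k. del k}" "card T = D"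
    by (meson obtain_subset_with_card_n)
  show ?thesis
    apply (rule bexI[OF _ a1n], rule exI[of _ T])
    using T awn a1n unfolding W_def by auto
qed



lemma prob_event:
  fixes x M :: nat
  assumes "x < M" "T \<subseteq> {1..n}" "0 \<le> \<delta>" "\<delta> \<le> 1"
  shows "measure_pmf.prob (Pi_pmf {..<M} undefined (\<lambda>_. pair_pmf (trace_pmf p \<delta> n) (pmf_of_set S)))
           {\<omega>. \<forall>k\<in>T. snd (fst (\<omega> x)) k} = \<delta> ^ card T"
proof -
  let ?P = "Pi_pmf {..<M} undefined (\<lambda>_. pair_pmf (trace_pmf p \<delta> n) (pmf_of_set S))"
  have "{\<omega>. \<forall>k\<in>T. snd (fst (\<omega> x)) k} = (\<lambda>\<omega>. snd (fst (\<omega> x))) -` {f. \<forall>k\<in>T. f k}" by auto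
  then have "measure_pmf.prob ?P {\<omega>. \<forall>k\<in>T. snd (fst (\<omega> x)) k}
     = measure_pmf.prob (map_pmf (\<lambda>\<omega>. snd (fst (\<omega> x))) ?P) {f. \<forall>k\<in>T. f k}" by simp
  also have "map_pmf (\<lambda>\<omega>. snd (fst (\<omega> x))) ?P = map_pmf snd (map_pmf fst (map_pmf (\<lambda>\<omega>. \<omega> x) ?P))"
    by (simp add: pmf.map_comp o_def)
  also have "map_pmf (\<lambda>\<omega>. \<omega> x) ?P = pair_pmf (trace_pmf p \<delta> n) (pmf_of_set S)"
    using Pi_pmf_component[OF finite_lessThan[of M], where x=x and dflt=undefined and p= "\<lambda>_. pair_pmf (trace_pmf p \<delta> n) (pmf_of_set S)"] assms(1)
    by simp
  also have "map_pmf snd (map_pmf fst (pair_pmf (trace_pmf p \<delta> n) (pmf_of_set S))) = Pi_pmf {1..n} False (\<lambda>k. bernoulli_pmf \<delta>)"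
    by (auto simp: map_fst_pair_pmf map_snd_pair_pmf trace_pmf_def)
  also have "{f. \<forall>k\<in>T. f k} = Pi {1..n} (\<lambda>k. if k \<in> T then {True} else UNIV)"
    using assms(2) by (auto simp: Pi_def split: if_splits)
  also have "measure_pmf.prob (Pi_pmf {1..n} False (\<lambda>k. bernoulli_pmf \<delta>)) \<dots>
      = (\<Prod>k\<in>{1..n}. measure_pmf.prob (bernoulli_pmf \<delta>) (if k \<in> T then {True} else UNIV))"
    by (rule measure_Pi_pmf_Pi) simp
  also have "\<dots> = (\<Prod>k\<in>{1..n}. if k \<in> T then \<delta> else 1)"
    using assms(3,4) by (intro prod.cong) (auto simp: measure_pmf_single)
  also have "\<dots> = \<delta> ^ card T"
    using assms(2) by (simp add: prod.If_cases Int_absorb1)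
  finally show ?thesis .
qed



lemma pow_fact_le_exp:
  fixes x :: real assumes "0 \<le> x"
  shows "x ^ n / fact n \<le> exp x"
proof -
  have s: "(\<lambda>n. x^n /\<^sub>R fact n) sums exp x" by (rule exp_converges)
  have "sum (\<lambda>n. x^n /\<^sub>R fact n) {n} \<le> suminf (\<lambda>n. x^n /\<^sub>R fact n)"
    by (rule sum_le_suminf) (use s assms in \<open>auto simp: sums_iff\<close>)
  then show ?thesis using s by (simp add: sums_iff divide_inverse mult.commute)
qed

lemma choose_bound:
  fixes N D :: nat assumes "D > 0"
  shows "real (N choose D) \<le> (exp 1 * N / D) ^ D"
proof -
  have "real (N choose D) * fact D \<le> real N ^ D"
    using binomial_fact_pow[of N D] by (metis of_nat_fact of_nat_le_iff of_nat_mult of_nat_power)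
  then have a: "real (N choose D) \<le> real N ^ D / fact D" by (simp add: field_simps)
  have "real D ^ D / fact D \<le> exp (real D)" by (rule pow_fact_le_exp) simp
  then have "real D ^ D \<le> exp (real D) * fact D" by (simp add: field_simps)
  then have "real N ^ D * real D ^ D \<le> real N ^ D * (exp (real D) * fact D)"
    by (rule mult_left_mono) simp
  then have "real N ^ D / fact D \<le> real N ^ D * exp (real D) / real D ^ D"
    using assms by (simp add: field_simps)
  also have "\<dots> = (exp 1 * N / D) ^ D"
    by (simp add: power_divide power_mult_distrib exp_of_nat_mult[symmetric] field_simps)
  finally show ?thesis using a by linarith
qed

lemma ln10_le: "ln (10::real) \<le> 5/2"
proof -
  have e: "exp (1::real) \<ge> 27/10" using e_approx_32 by (simp add: abs_if split: if_splits)
  have h: "exp (1/2::real) \<ge> 3/2" using exp_ge_add_one_self[of "1/2::real"] by simp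
  have "exp (5/2::real) = exp 1 * exp 1 * exp (1/2)" by (simp flip: exp_add)
  also have "\<dots> \<ge> 27/10 * (27/10) * (3/2)" using e h by (intro mult_mono) auto
  finally have "exp (5/2::real) \<ge> 10" by simp
  then show ?thesis by (metis ln_exp ln_le_cancel_iff exp_gt_zero zero_less_numeral)
qed

lemma pow10_le: "(10::real) powr (-4.76) \<le> 2 / 100000"
proof -
  have "((10::real) powr 0.24) ^ 25 = 10 powr 6" by (simp add: powr_realpow[symmetric] powr_powr)
  also have "\<dots> = 10^6" by (simp add: powr_realpow)
  also have "\<dots> \<le> (2::real) ^ 25" by simp
  finally have "((10::real) powr 0.24) ^ 25 \<le> 2 ^ 25" .
  then have "(10::real) powr 0.24 \<le> 2" using power_mono_iff[of "(10::real) powr 0.24" 2 25] by simp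
  moreover have "(10::real) powr 0.24 = 10 powr (-4.76) * 10 powr 5"
  proof -
    have "(10::real) powr 0.24 = 10 powr (-4.76 + 5)" by simp
    also have "\<dots> = 10 powr (-4.76) * 10 powr 5" by (rule powr_add)
    finally show ?thesis .
  qed
  moreover have "(10::real) powr 5 = 10^5" by (simp add: powr_realpow)
  ultimately show ?thesis by simp
qed

lemma core:
  fixes L l W Dr :: real
  assumes L: "L \<ge> 7 * ln 10" and l: "l \<ge> 2/3" and W: "W \<le> 10000 * l + 1" "W \<ge> 0"
    and Dr: "Dr \<ge> 10 * l / L" "Dr > 0"
  shows "exp 1 * (W + Dr) / Dr * exp (-L) \<le> exp (-0.32 * L)"
proof -
  have ln10: "ln (10::real) \<ge> 1" using ln_ge_iff[of 10 1] exp_le by (simp)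
  define L0 where "L0 = 7 * ln (10::real)"
  have L0: "L0 \<ge> 7" "L0 \<le> 35/2" using ln10 ln10_le unfolding L0_def by auto
  have Lpos: "L > 0" using L L0 L0_def by linarith
  have "W / Dr \<le> W / (10 * l / L)" using Dr W l Lpos by (intro divide_left_mono) auto
  also have "\<dots> = W * L / (10 * l)" using l Lpos by (simp add: field_simps)
  also have "\<dots> \<le> (10000 * l + 1) * L / (10 * l)" using W l Lpos by (intro divide_right_mono mult_right_mono) auto
  also have "\<dots> = 1000 * L + L / (10 * l)" using l by (simp add: field_simps)
  also have "\<dots> \<le> 1000 * L + (15/100) * L" using l Lpos by (simp add: field_simps)
  finally have "(W + Dr) / Dr \<le> (100015/100) * L + 1" using Dr by (simp add: add_divide_distrib)
  also have "\<dots> \<le> (10003/10) * L" using L L0 L0_def by linarith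
  finally have r: "(W + Dr) / Dr \<le> (10003/10) * L" .
  have mono: "L * exp (-(68/100) * L) \<le> L0 * exp (-(68/100) * L0)"
  proof -
    have "L / L0 \<le> exp (L / L0 - 1)" using exp_ge_add_one_self[of "L/L0 - 1"] by simp
    also have "\<dots> \<le> exp ((68/100) * (L - L0))"
    proof -
      have "L / L0 - 1 = (L - L0) / L0" using L0 by (simp add: field_simps)
      also have "\<dots> \<le> (L - L0) / 7" using L L0 L0_def by (intro divide_left_mono) auto
      also have "\<dots> \<le> (68/100) * (L - L0)" using L L0_def by simp
      finally show ?thesis by simp
    qed
    finally have "L \<le> L0 * exp ((68/100) * (L - L0))" using L0 by (simp add: field_simps)
    then have "L * exp (-(68/100) * L) \<le> L0 * exp ((68/100) * (L - L0)) * exp (-(68/100) * L)"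
      by (simp add: mult_right_mono)
    also have "\<dots> = L0 * exp ((68/100) * (L - L0) + -(68/100) * L)" by (simp add: mult.assoc flip: exp_add)
    also have "\<dots> = L0 * exp (-(68/100) * L0)"
      by (rule arg_cong[where f="\<lambda>t. L0 * exp t"]) (simp add: field_simps)
    finally show ?thesis .
  qed
  have "exp (-(68/100) * L0) = 10 powr (-4.76)" unfolding L0_def powr_def by simp
  then have k: "exp 1 * (10003/10) * (L * exp (-(68/100) * L)) \<le> 1"
  proof -
    have "exp 1 * (10003/10) * (L * exp (-(68/100) * L)) \<le> (272/100) * (10003/10) * (L0 * exp (-(68/100) * L0))"
    proof (rule mult_mono[OF _ mono])
      show "exp 1 * (10003/10) \<le> (272/100) * (10003/10::real)" using e_less_272 by simp
    qed (use Lpos in auto)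
    also have "\<dots> \<le> (272/100) * (10003/10) * (35/2 * (2/100000))"
      using L0 pow10_le \<open>exp (-(68/100) * L0) = 10 powr (-4.76)\<close>
      by (intro mult_left_mono mult_mono) auto
    finally show ?thesis by linarith
  qed
  have "exp 1 * (W + Dr) / Dr * exp (-L) \<le> exp 1 * ((10003/10) * L) * exp (-L)"
    using r by (simp add: mult_left_mono mult_right_mono times_divide_eq_right[symmetric] del: times_divide_eq_right)
  also have "\<dots> = (exp 1 * (10003/10) * (L * exp (-(68/100) * L))) * exp (-0.32 * L)"
    by (simp add: mult.assoc flip: exp_add)
  also have "\<dots> \<le> exp (-0.32 * L)" using k by (simp add: mult_left_le_one_le)
  finally show ?thesis .
qed


lemma main_bound:
  fixes \<delta> d :: real and m n w :: nat and p :: "nat \<Rightarrow> real"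
  assumes \<delta>: "0 < \<delta>" "\<delta> \<le> 10 powr (-7)" and n: "1 \<le> n" "n < m"
    and wdef: "w = nat \<lceil>10000 * ln (real m)\<rceil>"
    and ddef: "d = 10 * ln (real m) / ln (1 / \<delta>)"
  shows "measure_pmf.prob (trace_experiment p \<delta> n m w)
           {\<omega>. \<forall>x<m^2. real (block_deletions n (snd (fst (\<omega> x))) (snd (\<omega> x)) w) \<le> d \<and>
                         real (block_deletions n (snd (fst (\<omega> x))) (snd (\<omega> x) + 2 * w) w) \<le> d}
         \<ge> 1 - 1 * real m powr (-0.2)"
proof -
  define G where "G = {\<omega> :: nat \<Rightarrow> ((nat \<Rightarrow> bool) \<times> (nat \<Rightarrow> bool)) \<times> nat. \<forall>x<m^2. real (block_deletions n (snd (fst (\<omega> x))) (snd (\<omega> x)) w) \<le> d \<and>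
                         real (block_deletions n (snd (fst (\<omega> x))) (snd (\<omega> x) + 2 * w) w) \<le> d}"
  define S where "S = {1..n - 3*w + 1}"
  define P where "P = Pi_pmf {..<m^2} undefined (\<lambda>_. pair_pmf (trace_pmf p \<delta> n) (pmf_of_set S))"
  have Pdef: "trace_experiment p \<delta> n m w = P" unfolding P_def S_def trace_experiment_def by simp
  define l where "l = ln (real m)"
  define L where "L = ln (1 / \<delta>)"
  define D where "D = nat \<lfloor>d\<rfloor> + 1"
  have m2: "real m \<ge> 2" using n by simp
  have "ln 2 \<le> ln (real m)" using m2 by simp
  then have l: "l \<ge> 2/3" unfolding l_def using ln2_ge_two_thirds by linarith
  have "ln \<delta> \<le> ln (10 powr (-7))" using \<delta> by (subst ln_le_cancel_iff) auto
  then have L: "L \<ge> 7 * ln 10" unfolding L_def using \<delta> by (simp add: ln_div ln_powr)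
  have Lpos: "L > 0" using L ln_gt_zero[of "10::real"] by linarith
  have dpos: "d > 0" unfolding ddef using l Lpos l_def L_def by simp
  have dD: "real D > d" "real D \<ge> d" "D \<ge> 1" unfolding D_def using dpos by linarith+
  have wle: "real w \<le> 10000 * l + 1" unfolding wdef l_def using l l_def by linarith
  define I where "I = (\<lambda>a. {T. T \<subseteq> {a..<a+w+D} \<and> T \<subseteq> {1..n} \<and> card T = D})"
  define E where "E = (\<lambda>x (T::nat set). {\<omega>::nat \<Rightarrow> ((nat \<Rightarrow> bool) \<times> (nat \<Rightarrow> bool)) \<times> nat. \<forall>k\<in>T. snd (fst (\<omega> x)) k})"
  have bad: "UNIV - G \<subseteq> (\<Union>x\<in>{..<m^2}. \<Union>a\<in>{1..n}. \<Union>T\<in>I a. E x T)"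
  proof
    fix \<omega> assume "\<omega> \<in> UNIV - G"
    then obtain x where x: "x < m^2" and
      "\<not> (real (block_deletions n (snd (fst (\<omega> x))) (snd (\<omega> x)) w) \<le> d \<and>
         real (block_deletions n (snd (fst (\<omega> x))) (snd (\<omega> x) + 2 * w) w) \<le> d)"
      unfolding G_def by auto
    then obtain i where "real (block_deletions n (snd (fst (\<omega> x))) i w) > d" by (meson not_le)
    then have "block_deletions n (snd (fst (\<omega> x))) i w \<ge> D" unfolding D_def using dpos by linarith
    from block_bad[OF this dD(3)] obtain a T where "a \<in> {1..n}" "T \<in> I a" "\<forall>k\<in>T. snd (fst (\<omega> x)) k"
      unfolding I_def by blast
    then show "\<omega> \<in> (\<Union>x\<in>{..<m^2}. \<Union>a\<in>{1..n}. \<Union>T\<in>I a. E x T)" using x unfolding E_def by blast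
  qed
  have finI: "finite (I a)" for a
    unfolding I_def by (rule finite_subset[of _ "Pow {a..<a+w+D}"]) auto
  have cardI: "card (I a) \<le> (w + D) choose D" for a
  proof -
    have "card (I a) \<le> card {T. T \<subseteq> {a..<a+w+D} \<and> card T = D}"
      by (rule card_mono) (auto simp: I_def intro: finite_subset[of _ "Pow {a..<a+w+D}"])
    also have "\<dots> = (w + D) choose D" by (subst n_subsets) auto
    finally show ?thesis .
  qed
  have \<delta>1: "\<delta> \<le> 1" using \<delta> powr_less_one[of "10::real" "-7"] by simp
  have PE: "measure_pmf.prob P (E x T) = \<delta> ^ D" if "x < m^2" "T \<in> I a" for x a T
    using prob_event[of x "m^2" T n \<delta> p S] that \<delta> \<delta>1 unfolding P_def E_def I_def by auto
  have "measure_pmf.prob P (UNIV - G) \<le> measure_pmf.prob P (\<Union>x\<in>{..<m^2}. \<Union>a\<in>{1..n}. \<Union>T\<in>I a. E x T)"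
    using bad by (intro measure_pmf.finite_measure_mono) auto
  also have "\<dots> \<le> (\<Sum>x\<in>{..<m^2}. measure_pmf.prob P (\<Union>a\<in>{1..n}. \<Union>T\<in>I a. E x T))"
    by (rule measure_pmf.finite_measure_subadditive_finite) auto
  also have "\<dots> \<le> (\<Sum>x\<in>{..<m^2}. \<Sum>a\<in>{1..n}. measure_pmf.prob P (\<Union>T\<in>I a. E x T))"
    by (intro sum_mono measure_pmf.finite_measure_subadditive_finite) auto
  also have "\<dots> \<le> (\<Sum>x\<in>{..<m^2}. \<Sum>a\<in>{1..n}. \<Sum>T\<in>I a. measure_pmf.prob P (E x T))"
    by (intro sum_mono measure_pmf.finite_measure_subadditive_finite finI) auto
  also have "\<dots> = (\<Sum>x\<in>{..<m^2}. \<Sum>a\<in>{1..n}. real (card (I a)) * \<delta> ^ D)"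
    using PE by (intro sum.cong refl) auto
  also have "\<dots> \<le> (\<Sum>x\<in>{..<m^2}. \<Sum>a\<in>{1..n}. real ((w + D) choose D) * \<delta> ^ D)"
    using cardI \<delta> by (intro sum_mono mult_right_mono) auto
  also have "\<dots> = real m ^ 2 * real n * (real ((w + D) choose D) * \<delta> ^ D)" by simp
  finally have b1: "measure_pmf.prob P (UNIV - G) \<le> real m ^ 2 * real n * (real ((w + D) choose D) * \<delta> ^ D)" .
  have "real ((w + D) choose D) * \<delta> ^ D \<le> (exp 1 * real (w + D) / real D) ^ D * \<delta> ^ D"
    using choose_bound[of D "w + D"] dD \<delta> by (intro mult_right_mono) auto
  also have "\<dots> = (exp 1 * (real w + real D) / real D * exp (-L)) ^ D"
  proof -
    have eL: "exp (-L) = \<delta>" unfolding L_def using \<delta> by (simp add: ln_div)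
    show ?thesis by (simp only: eL power_mult_distrib of_nat_add)
  qed
  also have "\<dots> \<le> exp (-0.32 * L) ^ D"
    using core[OF L l wle _ _ _] dD dpos Lpos unfolding ddef l_def L_def
    by (intro power_mono) (auto simp: l_def L_def)
  also have "\<dots> = exp (-0.32 * L * real D)" by (simp add: exp_of_nat_mult[symmetric] mult.commute)
  also have "\<dots> \<le> exp (-0.32 * L * d)" using dD Lpos by simp
  also have "-0.32 * L * d = -3.2 * l" unfolding ddef l_def L_def using Lpos L_def by (simp add: field_simps)
  finally have b2: "real ((w + D) choose D) * \<delta> ^ D \<le> exp (-3.2 * l)" .
  have "real m ^ 2 * real n \<le> real m ^ 3" using n by (simp add: power3_eq_cube power2_eq_square)
  also have "real m ^ 3 = exp (3 * l)"
  proof -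
    have "real m powr 3 = real m ^ 3" using m2 by (simp add: powr_realpow)
    moreover have "real m powr 3 = exp (3 * l)" unfolding powr_def l_def using m2 by simp
    ultimately show ?thesis by simp
  qed
  finally have b3: "real m ^ 2 * real n \<le> exp (3 * l)" .
  have "measure_pmf.prob P (UNIV - G) \<le> exp (3 * l) * exp (-3.2 * l)"
  proof -
    have "real m ^ 2 * real n * (real ((w + D) choose D) * \<delta> ^ D) \<le> exp (3 * l) * exp (-3.2 * l)"
      by (rule mult_mono[OF b3 b2]) (use \<delta> in auto)
    then show ?thesis using b1 by linarith
  qed
  also have "\<dots> = real m powr (-0.2)" unfolding l_def powr_def using m2 by (simp flip: exp_add)
  finally have "measure_pmf.prob P (UNIV - G) \<le> real m powr (-0.2)" .
  moreover have "measure_pmf.prob P (UNIV - G) = 1 - measure_pmf.prob P G"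
    using measure_pmf.prob_compl[of G P] by simp
  ultimately show ?thesis unfolding Pdef G_def[symmetric] by simp
qed

theorem lemma10:
  "\<exists>C::real. \<forall>(\<delta>::real) (m::nat) (n::nat) (p::nat \<Rightarrow> real).
     0 < \<delta> \<and> \<delta> \<le> 10 powr (-7) \<and> 1 \<le> n \<and> n < m \<and>
     (\<forall>k\<in>{1..n}. 0 \<le> p k \<and> p k \<le> 1) \<and>
     3 * nat \<lceil>10000 * ln (real m)\<rceil> \<le> n \<longrightarrow>
     (let w = nat \<lceil>10000 * ln (real m)\<rceil>;
          d = 10 * ln (real m) / ln (1 / \<delta>)
      in measure_pmf.prob (trace_experiment p \<delta> n m w)
           {\<omega>. \<forall>x<m^2. real (block_deletions n (snd (fst (\<omega> x))) (snd (\<omega> x)) w) \<le> d \<and>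
                         real (block_deletions n (snd (fst (\<omega> x))) (snd (\<omega> x) + 2 * w) w) \<le> d}
         \<ge> 1 - C * real m powr (-0.2))"
proof (intro exI[of _ 1] allI impI)
  fix \<delta> :: real and m n :: nat and p :: "nat \<Rightarrow> real"
  assume h: "0 < \<delta> \<and> \<delta> \<le> 10 powr (-7) \<and> 1 \<le> n \<and> n < m \<and>
     (\<forall>k\<in>{1..n}. 0 \<le> p k \<and> p k \<le> 1) \<and>
     3 * nat \<lceil>10000 * ln (real m)\<rceil> \<le> n"
  show "let w = nat \<lceil>10000 * ln (real m)\<rceil>;
          d = 10 * ln (real m) / ln (1 / \<delta>)
      in measure_pmf.prob (trace_experiment p \<delta> n m w)
           {\<omega>. \<forall>x<m^2. real (block_deletions n (snd (fst (\<omega> x))) (snd (\<omega> x)) w) \<le> d \<and>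
                         real (block_deletions n (snd (fst (\<omega> x))) (snd (\<omega> x) + 2 * w) w) \<le> d}
         \<ge> 1 - 1 * real m powr (-0.2)"
    unfolding Let_def
    by (rule main_bound) (use h in auto)
qed

end
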